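(* Let $p>1$ and let $\Omega\subset\mathbb{R}^n$ be a smooth bounded open set with slab diameter at most $d$. Then the first Dirichlet eigenvalue of the $p$-Laplacian on $\Omega$ satisfies \[ \lambda_{1,p}(\Omega)\geq \left(\frac{p}{p-1}\right)^{p-1}\left(\frac{2}{d}\right)^{p}. \]
   Context: The slab diameter of a bounded open set $\Omega\subset\mathbb{R}^n$ is the infimum of the distances between two parallel hyperplanes such that $\Omega$ is contained in the region between them. The first eigenvalue is $\lambda_{1,p}(\Omega)=\inf\left\{\frac{\int_\Omega|\nabla v|^p\,dx}{\int_\Omega |v|^p\,dx} : v\in W^{1,p}_0(\Omega),\ v\neq 0\right\}$. *)

theory Defs
  imports "HOL-Analysis.Analysis"
begin

fun Ck :: "nat \<Rightarrow> ('a::euclidean_space \<Rightarrow> real) \<Rightarrow> bool" where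
  "Ck 0 f = continuous_on UNIV f"
| "Ck (Suc k) f = (\<exists>g. (\<forall>x. (f has_derivative (\<lambda>h. g x \<bullet> h)) (at x)) \<and>
                        (\<forall>i\<in>Basis. Ck k (\<lambda>x. g x \<bullet> i)))"

definition smooth_fun :: "('a::euclidean_space \<Rightarrow> real) \<Rightarrow> bool" where
  "smooth_fun f \<longleftrightarrow> (\<forall>k. Ck k f)"

definition smooth_domain :: "'a::euclidean_space set \<Rightarrow> bool" where
  "smooth_domain \<Omega> \<longleftrightarrow> (\<exists>\<rho>. smooth_fun \<rho> \<and> \<Omega> = {x. \<rho> x < 0} \<and>
      (\<forall>x. \<rho> x = 0 \<longrightarrow> (\<exists>D. (\<rho> has_derivative D) (at x) \<and> D \<noteq> (\<lambda>h. 0))))"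

definition slab_diameter :: "'a::euclidean_space set \<Rightarrow> real" where
  "slab_diameter \<Omega> = Inf {b - a | u a b. norm u = 1 \<and> \<Omega> \<subseteq> {x. a \<le> u \<bullet> x \<and> u \<bullet> x \<le> b}}"

definition test_fun :: "'a::euclidean_space set \<Rightarrow> ('a \<Rightarrow> real) \<Rightarrow> ('a \<Rightarrow> 'a) \<Rightarrow> bool" where
  "test_fun \<Omega> \<phi> G \<longleftrightarrow> smooth_fun \<phi> \<and> (\<forall>x. (\<phi> has_derivative (\<lambda>h. G x \<bullet> h)) (at x)) \<and>
      compact (closure {x. \<phi> x \<noteq> 0}) \<and> closure {x. \<phi> x \<noteq> 0} \<subseteq> \<Omega>"

(* W^{1,p}_0(\<Omega>): completion of C_c^\<infinity>(\<Omega>) in the W^{1,p} norm.  A pair (v, g) belongs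
   to it iff v, g are measurable and some sequence of test functions \<phi>_k converges to v
   in L^p(\<Omega>) while \<nabla>\<phi>_k converges to g in L^p(\<Omega>); g is then the weak gradient of v. *)
definition W0 :: "real \<Rightarrow> 'a::euclidean_space set \<Rightarrow> (('a \<Rightarrow> real) \<times> ('a \<Rightarrow> 'a)) set" where
  "W0 p \<Omega> = {(v, g). v \<in> borel_measurable lebesgue \<and> g \<in> borel_measurable lebesgue \<and>
      (\<exists>\<phi> G. (\<forall>k. test_fun \<Omega> (\<phi> k) (G k)) \<and>
         ((\<lambda>k. \<integral>\<^sup>+ x\<in>\<Omega>. ennreal (\<bar>\<phi> k x - v x\<bar> powr p) \<partial>lebesgue) \<longlonglongrightarrow> 0) \<and>
         ((\<lambda>k. \<integral>\<^sup>+ x\<in>\<Omega>. ennreal (norm (G k x - g x) powr p) \<partial>lebesgue) \<longlonglongrightarrow> 0))}"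

definition lambda1 :: "real \<Rightarrow> 'a::euclidean_space set \<Rightarrow> ennreal" where
  "lambda1 p \<Omega> = Inf {(\<integral>\<^sup>+ x\<in>\<Omega>. ennreal (norm (g x) powr p) \<partial>lebesgue) /
                        (\<integral>\<^sup>+ x\<in>\<Omega>. ennreal (\<bar>v x\<bar> powr p) \<partial>lebesgue)
                      | v g. (v, g) \<in> W0 p \<Omega> \<and> (\<integral>\<^sup>+ x\<in>\<Omega>. ennreal (\<bar>v x\<bar> powr p) \<partial>lebesgue) \<noteq> 0}"

end

theory Submission
  imports Defs
begin



lemma abs_powr_deriv:
  fixes q t :: real assumes q: "q > 1"
  shows "((\<lambda>t. \<bar>t\<bar> powr q) has_real_derivative (q * \<bar>t\<bar> powr (q-1) * sgn t)) (at t)"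
proof (cases "t = 0")
  case True
  have "((\<lambda>y. (\<bar>y\<bar> powr q - \<bar>0\<bar> powr q) / (y - 0)) \<longlongrightarrow> 0) (at (0::real))"
  proof (rule tendsto_rabs_zero_cancel)
    have "((\<lambda>y::real. \<bar>y\<bar> powr (q-1)) \<longlongrightarrow> 0 powr (q-1)) (at 0)"
    proof -
      have "((\<lambda>y::real. \<bar>y\<bar>) \<longlongrightarrow> 0) (at 0)"
        using tendsto_rabs[OF tendsto_ident_at[of 0 UNIV]] by simp
      then show ?thesis using q by (intro tendsto_intros) auto
    qed
    then have "((\<lambda>y::real. \<bar>y\<bar> powr (q-1)) \<longlongrightarrow> 0) (at 0)" using q by simp
    moreover have "\<forall>\<^sub>F y in at (0::real). \<bar>y\<bar> powr (q-1) = \<bar>(\<bar>y\<bar> powr q - \<bar>0\<bar> powr q) / (y - 0)\<bar>"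
      unfolding eventually_at_filter
    proof (intro always_eventually allI impI)
      fix y :: real assume "y \<noteq> 0"
      then show "\<bar>y\<bar> powr (q-1) = \<bar>(\<bar>y\<bar> powr q - \<bar>0\<bar> powr q) / (y - 0)\<bar>"
        using q by (simp add: abs_divide powr_diff)
    qed
    ultimately show "((\<lambda>y. \<bar>(\<bar>y\<bar> powr q - \<bar>0\<bar> powr q) / (y - 0)\<bar>) \<longlongrightarrow> 0) (at 0)"
      by (rule Lim_transform_eventually)
  qed
  then show ?thesis using True q
    by (simp add: has_field_derivative_iff)
next
  case False
  show ?thesis
  proof (cases "t > 0")
    case True
    have "((\<lambda>t. t powr q) has_real_derivative (q * \<bar>t\<bar> powr (q-1) * sgn t)) (at t)"
      using has_real_derivative_powr[OF True, of q] True by simp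
    then show ?thesis
      apply (rule has_field_derivative_transform_within_open[where S="{0<..}"])
      using True by auto
  next
    case False2: False
    then have tn: "t < 0" using False by auto
    have "((\<lambda>t. (-t) powr q) has_real_derivative (q * (-t) powr (q-1) * (-1))) (at t)"
      using tn by (intro DERIV_chain2[OF has_real_derivative_powr]) (auto intro!: derivative_eq_intros)
    then have "((\<lambda>t. (-t) powr q) has_real_derivative (q * \<bar>t\<bar> powr (q-1) * sgn t)) (at t)"
      using tn by simp
    then show ?thesis
      apply (rule has_field_derivative_transform_within_open[where S="{..<0}"])
      using tn by auto
  qed
qed

lemma young_p:
  fixes p a b :: real assumes "p > 1" "a \<ge> 0" "b \<ge> 0"
  shows "p * a * b \<le> a powr p + (p-1) * b powr (p/(p-1))"
proof -
  have q: "p/(p-1) > 1" using assms by (simp add: field_simps)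
  have "1/p + 1/(p/(p-1)) = 1" using assms by (simp add: field_simps)
  from Youngs_inequality[OF assms(1) q this assms(2,3)]
  have "a * b \<le> a powr p / p + b powr (p/(p-1)) / (p / (p - 1))" .
  then have "p * (a*b) \<le> p * (a powr p / p + b powr (p/(p-1)) / (p / (p - 1)))"
    using assms by simp
  also have "\<dots> = a powr p + (p-1) * b powr (p/(p-1))" using assms by (simp add: field_simps)
  finally show ?thesis by simp
qed



lemma powr_ge1_neg: fixes l e :: real assumes "0 < l" "l \<le> 1" "e \<le> 0" shows "l powr e \<ge> 1"
proof -
  have "(1/l) powr (-e) \<ge> 1" using assms by (intro ge_one_powr_ge_zero) auto
  moreover have "(1/l) powr (-e) = l powr e" using assms by (simp add: powr_divide powr_minus_divide)
  ultimately show ?thesis by simp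
qed

lemma conv_powr:
  fixes p l x y :: real assumes "p \<ge> 1" "0 < l" "l < 1" "x \<ge> 0" "y \<ge> 0"
  shows "(x + y) powr p \<le> l powr (1-p) * x powr p + (1-l) powr (1-p) * y powr p"
proof -
  have g1: "l powr (1-p) \<ge> 1" "(1-l) powr (1-p) \<ge> 1"
    using assms by (auto intro!: powr_ge1_neg)
  show ?thesis
  proof (cases "x = 0 \<or> y = 0")
    case True
    moreover have "x powr p \<le> l powr (1-p) * x powr p"
      using g1 mult_right_mono[OF g1(1), of "x powr p"] by simp
    moreover have "y powr p \<le> (1-l) powr (1-p) * y powr p"
      using g1 mult_right_mono[OF g1(2), of "y powr p"] by simp
    ultimately show ?thesis using assms by auto
  next
    case False
    then have xy: "x > 0" "y > 0" using assms by auto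
    have "(l * (x/l) + (1-l) * (y/(1-l))) powr p \<le> l * (x/l) powr p + (1-l) * (y/(1-l)) powr p"
      using convex_onD[OF powr_convex[OF assms(1)], of "1-l" "x/l" "y/(1-l)"] assms xy by auto
    also have "l * (x/l) powr p = l powr (1-p) * x powr p"
      using assms xy by (simp add: powr_divide powr_diff)
    also have "(1-l) * (y/(1-l)) powr p = (1-l) powr (1-p) * y powr p"
      using assms xy by (simp add: powr_divide powr_diff)
    also have "l * (x/l) + (1-l) * (y/(1-l)) = x + y" using assms by simp
    finally show ?thesis .
  qed
qed


definition ffK :: "real \<Rightarrow> real" where "ffK p = (p/(p-1)) powr (p-1)"
definition ffw :: "real \<Rightarrow> real \<Rightarrow> real \<Rightarrow> real" where
  "ffw p R t = R powr (p/(p-1)) - \<bar>t\<bar> powr (p/(p-1))"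
definition ff :: "real \<Rightarrow> real \<Rightarrow> real \<Rightarrow> real" where
  "ff p R t = ffK p * t * ffw p R t powr (1-p)"
definition ff' :: "real \<Rightarrow> real \<Rightarrow> real \<Rightarrow> real" where
  "ff' p R t = ffK p * ffw p R t powr (1-p) + ffK p * (p-1) * (p/(p-1)) * \<bar>t\<bar> powr (p/(p-1)) * ffw p R t powr (-p)"

lemma ffw_pos: assumes "p > 1" "\<bar>t\<bar> < R" shows "ffw p R t > 0"
proof -
  have "\<bar>t\<bar> powr (p/(p-1)) < R powr (p/(p-1))"
    using assms by (intro powr_less_mono2) auto
  then show ?thesis by (simp add: ffw_def)
qed

lemma ffw_le: assumes "p > 1" "R > 0" shows "ffw p R t \<le> R powr (p/(p-1))"
  by (simp add: ffw_def)

lemma ff_deriv: assumes p: "p > 1" and t: "\<bar>t\<bar> < R"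
  shows "(ff p R has_real_derivative ff' p R t) (at t)"
proof -
  let ?q = "p/(p-1)"
  have q: "?q > 1" using p by (simp add: field_simps)
  have w: "((ffw p R) has_real_derivative (- (?q * \<bar>t\<bar> powr (?q-1) * sgn t))) (at t)"
    unfolding ffw_def[abs_def]
    by (rule derivative_eq_intros abs_powr_deriv[OF q] | simp)+
  have wp: "ffw p R t > 0" using ffw_pos[OF p t] .
  have "((\<lambda>t. ffK p * t * ffw p R t powr (1-p)) has_real_derivative
        (ffK p * ffw p R t powr (1-p) + ffK p * t * ((1-p) * ffw p R t powr (1-p-1) * (- (?q * \<bar>t\<bar> powr (?q-1) * sgn t))))) (at t)"
    by (rule derivative_eq_intros DERIV_powr w wp | simp)+
  note D1 = this
  have E:  "ffK p * t * ((1-p) * ffw p R t powr (1-p-1) * (- (?q * \<bar>t\<bar> powr (?q-1) * sgn t)))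
     = ffK p * (p-1) * ?q * \<bar>t\<bar> powr ?q * ffw p R t powr (-p)"
  proof -
    have X: "t * sgn t * \<bar>t\<bar> powr (?q-1) = \<bar>t\<bar> powr ?q"
    proof (cases "t = 0")
      case True then show ?thesis using q by simp
    next
      case False
      then have "\<bar>t\<bar> * \<bar>t\<bar> powr (?q-1) = \<bar>t\<bar> powr ?q"
        by (simp add: powr_diff)
      then show ?thesis by (simp add: mult.commute abs_sgn)
    qed
    have e: "1-p-1 = -p" by simp
    have gen: "K * t * ((1-p) * W * (- (Q * A * s))) = K * (p-1) * Q * (t * s * A) * W" for K W Q A s :: real
      by (simp add: algebra_simps)
    show ?thesis unfolding e gen X ..
  qed
  have "ff p R = (\<lambda>t. ffK p * t * ffw p R t powr (1-p))" by (rule ext) (simp add: ff_def)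
  then show ?thesis unfolding ff'_def using D1[unfolded E] by simp
qed

lemma ff_ineq: assumes p: "p > 1" and t: "\<bar>t\<bar> < R"
  shows "ff' p R t - (p-1) * \<bar>ff p R t\<bar> powr (p/(p-1)) \<ge> ffK p * R powr (-p)"
proof -
  define q where "q = p/(p-1)"
  have q: "q > 1" using p by (simp add: q_def field_simps)
  have qp: "(p-1) * q = p" "q * (1-p) = -p" using p by (simp_all add: q_def field_simps)
  define W where "W = ffw p R t"
  have W: "W > 0" using ffw_pos[OF p t] by (simp add: W_def)
  define K where "K = ffK p"
  have K: "K > 0" using p by (simp add: K_def ffK_def)
  have Kq: "K powr q = K * q"
  proof -
    have "K powr q = q powr ((p-1)*q)" using q by (simp add: K_def ffK_def q_def powr_powr)
    also have "\<dots> = q powr (p - 1 + 1)" using qp by simp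
    also have "\<dots> = q powr (p-1) * q powr 1" by (simp only: powr_add)
    also have "\<dots> = K * q" using q p by (simp add: K_def ffK_def q_def)
    finally show ?thesis .
  qed
  have "\<bar>ff p R t\<bar> = K * \<bar>t\<bar> * W powr (1-p)"
    using K W by (simp add: ff_def K_def W_def abs_mult)
  then have "\<bar>ff p R t\<bar> powr q = K powr q * \<bar>t\<bar> powr q * W powr (-p)"
    using K W by (simp add: powr_mult powr_powr qp mult.commute)
  then have "(p-1) * \<bar>ff p R t\<bar> powr q = K * (p-1) * q * \<bar>t\<bar> powr q * W powr (-p)"
    unfolding Kq by simp
  then have eq: "ff' p R t - (p-1) * \<bar>ff p R t\<bar> powr q = K * W powr (1-p)"
    by (simp add: ff'_def K_def W_def q_def)
  have "R > 0" using t by linarith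
  have "W \<le> R powr q" using \<open>R > 0\<close> p by (simp add: W_def ffw_le q_def)
  then have "W powr (1-p) \<ge> (R powr q) powr (1-p)"
    using W p by (intro powr_mono2') auto
  also have "(R powr q) powr (1-p) = R powr (-p)" using qp by (simp add: powr_powr)
  finally show ?thesis using eq K by (simp add: K_def q_def)
qed

lemma ff_cont: assumes p: "p > 1"
  shows "continuous_on {-R<..<R} (ff p R)" "continuous_on {-R<..<R} (ff' p R)"
proof -
  show "continuous_on {-R<..<R} (ff p R)"
    by (intro continuous_at_imp_continuous_on ballI DERIV_isCont[OF ff_deriv[OF p]]) auto
  have q: "p/(p-1) > 0" using p by simp
  have c1: "continuous_on {-R<..<R} (ffw p R)"
    unfolding ffw_def[abs_def] using q
    by (intro continuous_on_diff continuous_on_const continuous_on_powr' continuous_intros) auto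
  have pos: "\<forall>t\<in>{-R<..<R}. ffw p R t \<noteq> 0"
  proof
    fix t assume "t \<in> {-R<..<R}"
    then have "\<bar>t\<bar> < R" by auto
    from ffw_pos[OF p this] show "ffw p R t \<noteq> 0" by simp
  qed
  show "continuous_on {-R<..<R} (ff' p R)"
  proof -
    have a: "continuous_on {-R<..<R} (\<lambda>t. ffw p R t powr e)" for e
      by (rule continuous_on_powr[OF c1 continuous_on_const pos])
    have b: "continuous_on {-R<..<R} (\<lambda>t::real. \<bar>t\<bar> powr (p/(p-1)))"
      using q by (intro continuous_on_powr' continuous_intros) auto
    show ?thesis unfolding ff'_def[abs_def]
      by (intro continuous_on_add continuous_on_mult continuous_on_const a b)
  qed
qed



lemma deriv_zero_open:
  fixes f :: "'a::euclidean_space \<Rightarrow> real"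
  assumes "(f has_derivative (\<lambda>h. g \<bullet> h)) (at x)" "open T" "x \<in> T" "\<And>y. y \<in> T \<Longrightarrow> f y = 0"
  shows "g = 0"
proof -
  have "((\<lambda>y. 0::real) has_derivative (\<lambda>h. 0)) (at x)" by simp
  then have "(f has_derivative (\<lambda>h. 0)) (at x)"
    by (rule has_derivative_transform_within_open[OF _ assms(2,3)]) (use assms(4) in auto)
  from has_derivative_unique[OF assms(1) this] have "(\<lambda>h. g \<bullet> h) = (\<lambda>h. 0)" .
  then have "g \<bullet> g = 0" by (metis)
  then show ?thesis by simp
qed

lemma test_fun_props:
  fixes \<phi> :: "'a::euclidean_space \<Rightarrow> real"
  assumes "test_fun \<Omega> \<phi> G"
  shows "continuous_on UNIV G" "continuous_on UNIV \<phi>"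
    "\<And>x. x \<notin> closure {x. \<phi> x \<noteq> 0} \<Longrightarrow> G x = 0"
    "\<And>x. x \<notin> closure {x. \<phi> x \<noteq> 0} \<Longrightarrow> \<phi> x = 0"
    "\<And>x. (\<phi> has_derivative (\<lambda>h. G x \<bullet> h)) (at x)"
    "compact (closure {x. \<phi> x \<noteq> 0})" "closure {x. \<phi> x \<noteq> 0} \<subseteq> \<Omega>"
proof -
  note tf = assms[unfolded test_fun_def]
  show der: "\<And>x. (\<phi> has_derivative (\<lambda>h. G x \<bullet> h)) (at x)" using tf by simp
  show "compact (closure {x. \<phi> x \<noteq> 0})" "closure {x. \<phi> x \<noteq> 0} \<subseteq> \<Omega>" using tf by simp_all
  show z: "\<And>x. x \<notin> closure {x. \<phi> x \<noteq> 0} \<Longrightarrow> \<phi> x = 0"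
    by (meson closure_subset mem_Collect_eq subsetD)
  show "continuous_on UNIV \<phi>"
    by (rule continuous_at_imp_continuous_on) (use der has_derivative_continuous in blast)
  show "\<And>x. x \<notin> closure {x. \<phi> x \<noteq> 0} \<Longrightarrow> G x = 0"
  proof -
    fix x assume x: "x \<notin> closure {x. \<phi> x \<noteq> 0}"
    have xin: "x \<in> - closure {x. \<phi> x \<noteq> 0}" using x by simp
    show "G x = 0"
      by (rule deriv_zero_open[OF der open_Compl[OF closed_closure] xin]) (metis ComplD z)
  qed
  have "Ck (Suc 0) \<phi>" using tf unfolding smooth_fun_def by simp
  then obtain g where g: "\<And>x. (\<phi> has_derivative (\<lambda>h. g x \<bullet> h)) (at x)"
      and gc: "\<And>i. i \<in> Basis \<Longrightarrow> continuous_on UNIV (\<lambda>x. g x \<bullet> i)"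
    by (auto simp del: Ck.simps(1)) (auto simp: Ck.simps(1))
  have Gg: "G x = g x" for x
  proof -
    from has_derivative_unique[OF der g] have "(\<lambda>h. G x \<bullet> h) = (\<lambda>h. g x \<bullet> h)" .
    then have "G x \<bullet> (G x - g x) = g x \<bullet> (G x - g x)" by metis
    then have "(G x - g x) \<bullet> (G x - g x) = 0" by (simp add: inner_diff_left)
    then show ?thesis by simp
  qed
  have "continuous_on UNIV (\<lambda>x. \<Sum>i\<in>Basis. (g x \<bullet> i) *\<^sub>R i)"
    by (intro continuous_on_sum continuous_on_scaleR gc continuous_on_const)
  then show "continuous_on UNIV G" unfolding Gg euclidean_representation .
qed

lemma cont_local:
  fixes k :: "'a::euclidean_space \<Rightarrow> 'b::real_normed_vector"
  assumes "closed S" "S \<subseteq> U" "open U" "continuous_on U k" "\<And>x. x \<notin> S \<Longrightarrow> k x = 0"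
  shows "continuous_on UNIV k"
proof (rule continuous_at_imp_continuous_on, rule ballI)
  fix x
  show "isCont k x"
  proof (cases "x \<in> U")
    case True
    then show ?thesis using assms(3,4) continuous_on_eq_continuous_at by blast
  next
    case False
    then have xS: "x \<in> - S" using assms(2) by auto
    have "continuous_on (-S) (\<lambda>x. 0)" by simp
    then have "continuous_on (-S) k"
      by (rule continuous_on_cong[THEN iffD1, rotated 2]) (use assms(5) in auto)
    then show ?thesis using xS assms(1) continuous_on_eq_continuous_at open_Compl by blast
  qed
qed



lemma spow_cont: fixes e :: real assumes e: "e > 0"
  shows "continuous_on UNIV (\<lambda>t::real. \<bar>t\<bar> powr e * sgn t)"
proof -
  have c1: "continuous_on {0..} (\<lambda>t::real. \<bar>t\<bar> powr e * sgn t)"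
  proof -
    have "continuous_on {0..} (\<lambda>t::real. t powr e)"
      using e by (intro continuous_on_powr' continuous_intros) auto
    then show ?thesis
      by (rule continuous_on_cong[THEN iffD1, rotated 2]) (auto simp: sgn_if)
  qed
  have c2: "continuous_on {..0} (\<lambda>t::real. \<bar>t\<bar> powr e * sgn t)"
  proof -
    have "continuous_on {..0} (\<lambda>t::real. - ((-t) powr e))"
      using e by (intro continuous_on_powr' continuous_intros) auto
    then show ?thesis
      by (rule continuous_on_cong[THEN iffD1, rotated 2]) (auto simp: sgn_if)
  qed
  have "continuous_on ({..0} \<union> {0..}) (\<lambda>t::real. \<bar>t\<bar> powr e * sgn t)"
    by (rule continuous_on_closed_Un[OF _ _ c2 c1]) auto
  moreover have "{..0} \<union> {0..} = (UNIV::real set)" by auto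
  ultimately show ?thesis by simp
qed

lemma nn_conv:
  fixes k :: "'a::euclidean_space \<Rightarrow> real"
  assumes "continuous_on UNIV k" "\<And>x. k x \<ge> 0" "\<And>x. x \<notin> S \<Longrightarrow> k x = 0" "S \<subseteq> \<Omega>" "S \<subseteq> cbox c d"
  shows "(\<integral>\<^sup>+ x\<in>\<Omega>. ennreal (k x) \<partial>lebesgue) = ennreal (integral (cbox c d) k)"
proof -
  have "k integrable_on cbox c d"
    by (rule integrable_continuous) (rule continuous_on_subset[OF assms(1)], simp)
  then have "(k has_integral integral (cbox c d) k) (cbox c d)" by (rule integrable_integral)
  then have "(k has_integral integral (cbox c d) k) UNIV"
    by (rule has_integral_on_superset) (use assms(3,5) in auto)
  then have "integral\<^sup>N lebesgue (\<lambda>x. ennreal (k x)) = ennreal (integral (cbox c d) k)"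
    using has_integral_iff_nn_integral_lebesgue[of k] assms(2) by blast
  moreover have "(\<integral>\<^sup>+ x\<in>\<Omega>. ennreal (k x) \<partial>lebesgue) = integral\<^sup>N lebesgue (\<lambda>x. ennreal (k x))"
  proof (rule nn_integral_cong)
    fix x
    show "ennreal (k x) * indicator \<Omega> x = ennreal (k x)"
    proof (cases "x \<in> \<Omega>")
      case False
      then have "x \<notin> S" using assms(4) by blast
      then show ?thesis using assms(3)[of x] by simp
    qed simp
  qed
  ultimately show ?thesis by simp
qed




lemma main_test:
  fixes \<Omega> :: "'a::euclidean_space set" and \<phi> :: "'a \<Rightarrow> real" and G :: "'a \<Rightarrow> 'a"
  assumes p: "p > 1" and \<Omega>: "open \<Omega>" and u: "norm u = 1"
    and slab: "\<Omega> \<subseteq> {x. a \<le> u \<bullet> x \<and> u \<bullet> x \<le> b}" and ab: "a < b"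
    and tf: "test_fun \<Omega> \<phi> G"
  shows "\<exists>A B. (\<integral>\<^sup>+ x\<in>\<Omega>. ennreal (norm (G x) powr p) \<partial>lebesgue) = ennreal A \<and>
               (\<integral>\<^sup>+ x\<in>\<Omega>. ennreal (\<bar>\<phi> x\<bar> powr p) \<partial>lebesgue) = ennreal B \<and>
               ffK p * ((b-a)/2) powr (-p) * B \<le> A"
proof -
  define S where "S = closure {x. \<phi> x \<noteq> 0}"
  note props = test_fun_props[OF tf, folded S_def]
  have Gc: "continuous_on UNIV G" and \<phi>c: "continuous_on UNIV \<phi>"
    and G0: "\<And>x. x \<notin> S \<Longrightarrow> G x = 0" and \<phi>0: "\<And>x. x \<notin> S \<Longrightarrow> \<phi> x = 0"
    and \<phi>d: "\<And>x. (\<phi> has_derivative (\<lambda>h. G x \<bullet> h)) (at x)"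
    and Scomp: "compact S" and SO: "S \<subseteq> \<Omega>" using props by auto
  have Sclosed: "closed S" by (simp add: S_def)
  define m where "m = (a+b)/2"
  define R where "R = (b-a)/2"
  have R: "R > 0" using ab by (simp add: R_def)
  define U where "U = {x. \<bar>u \<bullet> x - m\<bar> < R}"
  have Uopen: "open U" unfolding U_def
    by (intro open_Collect_less continuous_intros)
  have uu: "u \<bullet> u = 1" using u by (simp add: power2_norm_eq_inner[symmetric])
  have OU: "\<Omega> \<subseteq> U"
  proof
    fix x assume x: "x \<in> \<Omega>"
    obtain e where e: "e > 0" "ball x e \<subseteq> \<Omega>" using \<Omega> x open_contains_ball by blast
    have "x + (e/2) *\<^sub>R u \<in> ball x e" "x - (e/2) *\<^sub>R u \<in> ball x e"
      using e u by (auto simp: dist_norm)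
    then have "x + (e/2) *\<^sub>R u \<in> \<Omega>" "x - (e/2) *\<^sub>R u \<in> \<Omega>" using e by auto
    then have "u \<bullet> (x + (e/2) *\<^sub>R u) \<le> b" "a \<le> u \<bullet> (x - (e/2) *\<^sub>R u)" using slab by auto
    then have "u \<bullet> x + e/2 \<le> b" "a \<le> u \<bullet> x - e/2"
      using uu by (simp_all add: inner_add_right inner_diff_right)
    then have "-R < u \<bullet> x - m \<and> u \<bullet> x - m < R" using e unfolding m_def R_def by (intro conjI) argo+
    then show "x \<in> U" by (simp add: U_def abs_less_iff)
  qed
  have SU: "S \<subseteq> U" using SO OU by auto
  have xU: "\<bar>u \<bullet> x - m\<bar> < R" if "x \<in> U" for x using that by (simp add: U_def)
  define spw where "spw x = \<bar>\<phi> x\<bar> powr (p-1) * sgn (\<phi> x)" for x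
  define \<psi> where "\<psi> x = \<bar>\<phi> x\<bar> powr p" for x
  define Ff where "Ff x = ff p R (u \<bullet> x - m)" for x
  define Ff' where "Ff' x = ff' p R (u \<bullet> x - m)" for x
  define F where "F x = Ff x * \<psi> x" for x
  define DF where "DF x = (\<lambda>h. Ff x * (p * spw x * (G x \<bullet> h)) + Ff' x * (u \<bullet> h) * \<psi> x)" for x
  define dF where "dF x = Ff' x * \<psi> x + Ff x * (p * spw x * (G x \<bullet> u))" for x
  have spw0: "spw x = 0" "\<psi> x = 0" if "x \<notin> S" for x
    using \<phi>0[OF that] p by (simp_all add: spw_def \<psi>_def)
  have \<psi>d: "(\<psi> has_derivative (\<lambda>h. p * spw x * (G x \<bullet> h))) (at x)" for x
  proof -
    have "((\<lambda>x. \<bar>\<phi> x\<bar> powr p) has_derivative (\<lambda>h. (p * \<bar>\<phi> x\<bar> powr (p-1) * sgn (\<phi> x)) * (G x \<bullet> h))) (at x)"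
      by (rule has_derivative_compose[OF \<phi>d has_field_derivative_imp_has_derivative[OF abs_powr_deriv[OF p]]])
    then show ?thesis unfolding \<psi>_def[abs_def] spw_def by (simp add: mult.assoc)
  qed
  have Fd: "(F has_derivative DF x) (at x)" for x
  proof (cases "x \<in> U")
    case True
    have t: "\<bar>u \<bullet> x - m\<bar> < R" using xU[OF True] .
    have "((\<lambda>x. u \<bullet> x - m) has_derivative (\<lambda>h. u \<bullet> h)) (at x)"
      by (auto intro!: derivative_eq_intros)
    from has_derivative_compose[OF this has_field_derivative_imp_has_derivative[OF ff_deriv[OF p t]]]
    have "(Ff has_derivative (\<lambda>h. ff' p R (u \<bullet> x - m) * (u \<bullet> h))) (at x)"
      unfolding Ff_def[abs_def] .
    from has_derivative_mult[OF this \<psi>d]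
    show ?thesis unfolding F_def[abs_def] DF_def Ff'_def
      by (rule has_derivative_eq_rhs) (auto simp: fun_eq_iff Ff_def)
  next
    case False
    then have xS: "x \<in> -S" using SU by auto
    have "((\<lambda>x. 0) has_derivative (\<lambda>h. 0)) (at x)" by simp
    then have "(F has_derivative (\<lambda>h. 0)) (at x)"
      by (rule has_derivative_transform_within_open[OF _ _ xS]) (use Sclosed spw0 in \<open>auto simp: F_def\<close>)
    moreover have "DF x = (\<lambda>h. 0)" using spw0[of x] xS by (simp add: DF_def fun_eq_iff)
    ultimately show ?thesis by simp
  qed
  have \<psi>c: "continuous_on UNIV \<psi>"
    by (rule continuous_at_imp_continuous_on) (use \<psi>d has_derivative_continuous in blast)
  have Fc: "continuous_on UNIV F"
    by (rule continuous_at_imp_continuous_on) (use Fd has_derivative_continuous in blast)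
  have spwc: "continuous_on UNIV spw"
  proof -
    have "continuous_on UNIV (\<lambda>x. (\<lambda>t. \<bar>t\<bar> powr (p-1) * sgn t) (\<phi> x))"
      by (rule continuous_on_compose2[OF spow_cont \<phi>c]) (use p in auto)
    then show ?thesis unfolding spw_def[abs_def] by simp
  qed
  have img: "(\<lambda>x. u \<bullet> x - m) ` U \<subseteq> {-R<..<R}" using xU by (force simp: abs_less_iff)
  have cU: "continuous_on U (\<lambda>x. u \<bullet> x - m)" by (intro continuous_intros)
  have Ffc: "continuous_on U Ff" unfolding Ff_def[abs_def]
    by (rule continuous_on_compose2[OF ff_cont(1)[OF p] cU img])
  have Ff'c: "continuous_on U Ff'" unfolding Ff'_def[abs_def]
    by (rule continuous_on_compose2[OF ff_cont(2)[OF p] cU img])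
  have dFc: "continuous_on UNIV dF"
  proof (rule cont_local[OF Sclosed SU Uopen])
    show "continuous_on U dF" unfolding dF_def[abs_def]
      by (intro continuous_intros Ffc Ff'c continuous_on_subset[OF \<psi>c] continuous_on_subset[OF spwc]
          continuous_on_subset[OF Gc]) auto
    show "dF x = 0" if "x \<notin> S" for x using spw0[OF that] by (simp add: dF_def)
  qed
  have Gpc: "continuous_on UNIV (\<lambda>x. norm (G x) powr p)"
    using p by (intro continuous_on_powr' continuous_intros Gc) auto
  obtain M where M: "\<And>x. x \<in> S \<Longrightarrow> norm x \<le> M"
    using compact_imp_bounded[OF Scomp] bounded_iff by blast
  obtain c :: 'a where c: "cball 0 (M+1) \<subseteq> cbox (-c) c"
    using bounded_subset_cbox_symmetric[OF bounded_cball] by blast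
  define B where "B = cbox (-c) c"
  have SB: "S \<subseteq> B" using M c by (force simp: B_def)
  have F0: "F x = 0" if "x \<notin> S" for x using spw0[OF that] by (simp add: F_def)
  have sd: "((\<lambda>s. F (x + s *\<^sub>R u)) has_field_derivative dF (x + s *\<^sub>R u)) (at s within UNIV)" for x s
  proof -
    have "((\<lambda>s. x + s *\<^sub>R u) has_derivative (\<lambda>h. h *\<^sub>R u)) (at s)"
      by (auto intro!: derivative_eq_intros)
    from has_derivative_compose[OF this Fd]
    have "((\<lambda>s. F (x + s *\<^sub>R u)) has_derivative (\<lambda>h. DF (x + s *\<^sub>R u) (h *\<^sub>R u))) (at s)" .
    then show ?thesis unfolding has_field_derivative_def
      by (rule has_derivative_eq_rhs) (simp add: fun_eq_iff DF_def dF_def uu algebra_simps)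
  qed
  have Fsc: "continuous_on UNIV (\<lambda>x. F (x + s *\<^sub>R u))" for s
    by (rule continuous_on_compose2[OF Fc]) (auto intro!: continuous_intros)
  have int1: "(\<lambda>x. F (x + s *\<^sub>R u)) integrable_on cbox (-c) c" for s
    by (rule integrable_continuous) (rule continuous_on_subset[OF Fsc], simp)
  have cfx: "continuous_on (UNIV \<times> cbox (-c) c) (\<lambda>(s, x). dF (x + s *\<^sub>R u))"
  proof -
    have "continuous_on (UNIV \<times> cbox (-c) c) (\<lambda>z. dF (snd z + fst z *\<^sub>R u))"
      by (rule continuous_on_compose2[OF dFc]) (auto intro!: continuous_intros)
    then show ?thesis by (simp add: case_prod_beta)
  qed
  have L: "((\<lambda>s. integral (cbox (-c) c) (\<lambda>x. F (x + s *\<^sub>R u))) has_field_derivative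
            integral (cbox (-c) c) (\<lambda>x. dF (x + 0 *\<^sub>R u))) (at 0 within UNIV)"
    by (rule leibniz_rule_field_derivative[where f = "\<lambda>s x. F (x + s *\<^sub>R u)" and fx = "\<lambda>s x. dF (x + s *\<^sub>R u)"])
       (use sd int1 cfx in auto)
  have intF: "(F has_integral integral B F) B"
    unfolding B_def using int1[of 0] by (simp add: integrable_integral)
  have trans: "integral B (\<lambda>x. F (x + s *\<^sub>R u)) = integral B F" if s: "\<bar>s\<bar> < 1" for s
  proof -
    define cc where "cc = s *\<^sub>R u"
    have "((\<lambda>x. F (1 *\<^sub>R x + cc)) has_integral (1 / (\<bar>1\<bar> ^ DIM('a))) *\<^sub>R integral B F)
            ((\<lambda>x. (1 / 1) *\<^sub>R x + -((1 / 1) *\<^sub>R cc)) ` B)"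
      using has_integral_affinity[OF intF[unfolded B_def], of 1 cc] unfolding B_def by simp
    then have h1: "((\<lambda>x. F (x + cc)) has_integral integral B F) ((\<lambda>x. x - cc) ` B)" by simp
    have h1': "((\<lambda>x. F (x + cc)) has_integral integral B F) UNIV"
    proof (rule has_integral_on_superset[OF h1])
      fix x assume "x \<notin> (\<lambda>x. x - cc) ` B"
      then have "x + cc \<notin> B" by (metis (no_types, lifting) add_diff_cancel image_eqI)
      then have "x + cc \<notin> S" using SB by auto
      then show "F (x + cc) = 0" by (rule F0)
    qed simp
    have h2: "((\<lambda>x. F (x + cc)) has_integral integral B (\<lambda>x. F (x + cc))) B"
      using int1[of s] by (simp add: integrable_integral B_def cc_def)
    have h2': "((\<lambda>x. F (x + cc)) has_integral integral B (\<lambda>x. F (x + cc))) UNIV"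
    proof (rule has_integral_on_superset[OF h2])
      fix x assume xB: "x \<notin> B"
      show "F (x + cc) = 0"
      proof (rule F0, rule notI)
        assume "x + cc \<in> S"
        then have "norm (x + cc) \<le> M" by (rule M)
        moreover have "norm cc \<le> 1" using s u by (simp add: cc_def)
        ultimately have "norm x \<le> M + 1" using norm_triangle_ineq4[of "x + cc" cc] by simp
        then have "x \<in> B" using c by (auto simp: B_def)
        with xB show False by simp
      qed
    qed simp
    show ?thesis using has_integral_unique[OF h1' h2'] by (simp add: cc_def)
  qed
  have "((\<lambda>s. integral B F) has_field_derivative 0) (at 0)" by simp
  then have "((\<lambda>s. integral (cbox (-c) c) (\<lambda>x. F (x + s *\<^sub>R u))) has_field_derivative 0) (at 0)"
    by (rule has_field_derivative_transform_within_open[where S = "ball 0 1"])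
       (use trans in \<open>auto simp: B_def\<close>)
  with L have dF0: "integral B dF = 0" by (simp add: DERIV_unique B_def)
  define C where "C = ffK p * R powr (-p)"
  have pw: "C * \<psi> x \<le> norm (G x) powr p + dF x" for x
  proof (cases "\<phi> x = 0")
    case True
    then have z: "\<psi> x = 0" "spw x = 0" using p by (simp_all add: \<psi>_def spw_def)
    then have "dF x = 0" by (simp add: dF_def)
    then show ?thesis using z by (simp add: C_def)
  next
    case False
    have "x \<in> S" using closure_subset[of "{x. \<phi> x \<noteq> 0}"] False unfolding S_def by (simp add: subset_iff)
    then have t: "\<bar>u \<bullet> x - m\<bar> < R" using SU xU by blast
    define q where "q = p/(p-1)"
    have qp: "(p-1) * q = p" using p by (simp add: q_def)
    define g where "g = norm (G x)"
    define \<Phi> where "\<Phi> = \<bar>\<phi> x\<bar>"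
    define y where "y = \<bar>Ff x\<bar> * \<Phi> powr (p-1)"
    have g0: "g \<ge> 0" "\<Phi> \<ge> 0" "y \<ge> 0" by (simp_all add: g_def \<Phi>_def y_def)
    have \<psi>x: "\<psi> x = \<Phi> powr p" by (simp add: \<psi>_def \<Phi>_def)
    have \<psi>0: "\<psi> x \<ge> 0" by (simp add: \<psi>_def)
    have ineq: "Ff' x - (p-1) * \<bar>Ff x\<bar> powr q \<ge> C"
      using ff_ineq[OF p t] by (simp add: Ff_def Ff'_def C_def q_def)
    have f1: "Ff' x * \<psi> x \<ge> C * \<psi> x + (p-1) * (\<bar>Ff x\<bar> powr q * \<psi> x)"
    proof -
      have "Ff' x * \<psi> x \<ge> (C + (p-1) * \<bar>Ff x\<bar> powr q) * \<psi> x"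
        using ineq \<psi>0 by (intro mult_right_mono) auto
      then show ?thesis by (simp add: algebra_simps)
    qed
    have yq: "y powr q = \<bar>Ff x\<bar> powr q * \<psi> x"
      unfolding y_def \<psi>x using g0 by (simp add: powr_mult powr_powr qp)
    have f3: "p * g * y \<le> g powr p + (p-1) * (\<bar>Ff x\<bar> powr q * \<psi> x)"
      using young_p[OF p g0(1) g0(3)] yq by (simp add: q_def)
    have "\<bar>Ff x * (p * spw x * (G x \<bullet> u))\<bar> = p * \<bar>Ff x\<bar> * \<Phi> powr (p-1) * \<bar>G x \<bullet> u\<bar>"
      using p False by (simp add: spw_def \<Phi>_def abs_mult)
    also have "\<dots> \<le> p * \<bar>Ff x\<bar> * \<Phi> powr (p-1) * g"
    proof -
      have "\<bar>G x \<bullet> u\<bar> \<le> g" using Cauchy_Schwarz_ineq2[of "G x" u] u by (simp add: g_def)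
      then show ?thesis using p by (intro mult_left_mono) auto
    qed
    also have "\<dots> = p * g * y" by (simp add: y_def)
    finally have f2: "Ff x * (p * spw x * (G x \<bullet> u)) \<ge> - (p * g * y)" by linarith
    show ?thesis using f1 f2 f3 unfolding dF_def g_def by linarith
  qed
  have iG: "(\<lambda>x. norm (G x) powr p) integrable_on B" unfolding B_def
    by (rule integrable_continuous) (rule continuous_on_subset[OF Gpc], simp)
  have i\<psi>: "\<psi> integrable_on B" unfolding B_def
    by (rule integrable_continuous) (rule continuous_on_subset[OF \<psi>c], simp)
  have idF: "dF integrable_on B" unfolding B_def
    by (rule integrable_continuous) (rule continuous_on_subset[OF dFc], simp)
  have "integral B (\<lambda>x. C * \<psi> x) \<le> integral B (\<lambda>x. norm (G x) powr p + dF x)"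
    by (rule integral_le) (use iG i\<psi> idF pw integrable_on_cmult_left[OF i\<psi>, of C] in \<open>auto intro: integrable_add\<close>)
  also have "\<dots> = integral B (\<lambda>x. norm (G x) powr p) + integral B dF"
    by (rule integral_add[OF iG idF])
  finally have main: "C * integral B \<psi> \<le> integral B (\<lambda>x. norm (G x) powr p)"
    using dF0 by simp
  have e1: "(\<integral>\<^sup>+ x\<in>\<Omega>. ennreal (norm (G x) powr p) \<partial>lebesgue) = ennreal (integral B (\<lambda>x. norm (G x) powr p))"
    unfolding B_def by (rule nn_conv[OF Gpc _ _ SO SB[unfolded B_def]]) (use G0 p in auto)
  have e2: "(\<integral>\<^sup>+ x\<in>\<Omega>. ennreal (\<bar>\<phi> x\<bar> powr p) \<partial>lebesgue) = ennreal (integral B \<psi>)"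
    unfolding B_def \<psi>_def[symmetric]
    by (rule nn_conv[OF \<psi>c _ _ SO SB[unfolded B_def]]) (use spw0 in \<open>auto simp: \<psi>_def\<close>)
  show ?thesis using e1 e2 main unfolding C_def R_def by blast
qed



lemma cont_meas: fixes f :: "'a::euclidean_space \<Rightarrow> 'b::euclidean_space"
  assumes "continuous_on UNIV f" shows "f \<in> borel_measurable lebesgue"
proof -
  have "(\<lambda>x. x) \<in> borel_measurable (lborel :: 'a measure)" by simp
  then have "(\<lambda>x. x) \<in> borel_measurable (lebesgue :: 'a measure)" by (rule measurable_completion)
  from borel_measurable_continuous_on[OF assms this] show ?thesis by simp
qed

lemma split_int:
  fixes fa fb fc :: "'a::euclidean_space \<Rightarrow> real"
  assumes p: "p \<ge> 1" and l: "0 < l" "l < 1"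
    and nn: "\<And>x. fb x \<ge> 0" "\<And>x. fc x \<ge> 0" and le: "\<And>x. \<bar>fa x\<bar> \<le> fb x + fc x"
    and [measurable]: "fb \<in> borel_measurable lebesgue" "fc \<in> borel_measurable lebesgue"
      "\<Omega> \<in> sets lebesgue"
  shows "(\<integral>\<^sup>+ x\<in>\<Omega>. ennreal (\<bar>fa x\<bar> powr p) \<partial>lebesgue) \<le>
         ennreal (l powr (1-p)) * (\<integral>\<^sup>+ x\<in>\<Omega>. ennreal (fb x powr p) \<partial>lebesgue) +
         ennreal ((1-l) powr (1-p)) * (\<integral>\<^sup>+ x\<in>\<Omega>. ennreal (fc x powr p) \<partial>lebesgue)"
proof -
  define c1 where "c1 = l powr (1-p)"
  define c2 where "c2 = (1-l) powr (1-p)"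
  have c: "c1 \<ge> 0" "c2 \<ge> 0" by (simp_all add: c1_def c2_def)
  have pt: "\<bar>fa x\<bar> powr p \<le> c1 * fb x powr p + c2 * fc x powr p" for x
  proof -
    have "\<bar>fa x\<bar> powr p \<le> (fb x + fc x) powr p"
      using le[of x] p by (intro powr_mono2) auto
    also have "\<dots> \<le> c1 * fb x powr p + c2 * fc x powr p"
      unfolding c1_def c2_def by (rule conv_powr[OF p l nn])
    finally show ?thesis .
  qed
  have "(\<integral>\<^sup>+ x\<in>\<Omega>. ennreal (\<bar>fa x\<bar> powr p) \<partial>lebesgue) \<le>
        (\<integral>\<^sup>+ x. ennreal (c1 * fb x powr p) * indicator \<Omega> x + ennreal (c2 * fc x powr p) * indicator \<Omega> x \<partial>lebesgue)"
  proof (rule nn_integral_mono)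
    fix x
    have "ennreal (\<bar>fa x\<bar> powr p) \<le> ennreal (c1 * fb x powr p) + ennreal (c2 * fc x powr p)"
      using pt[of x] c by (simp add: ennreal_plus[symmetric] del: ennreal_plus)
    then show "ennreal (\<bar>fa x\<bar> powr p) * indicator \<Omega> x \<le>
        ennreal (c1 * fb x powr p) * indicator \<Omega> x + ennreal (c2 * fc x powr p) * indicator \<Omega> x"
      by (auto simp: indicator_def)
  qed
  also have "\<dots> = (\<integral>\<^sup>+ x. ennreal (c1 * fb x powr p) * indicator \<Omega> x \<partial>lebesgue) +
                  (\<integral>\<^sup>+ x. ennreal (c2 * fc x powr p) * indicator \<Omega> x \<partial>lebesgue)"
    by (rule nn_integral_add) measurable
  also have "(\<integral>\<^sup>+ x. ennreal (c1 * fb x powr p) * indicator \<Omega> x \<partial>lebesgue) =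
             ennreal c1 * (\<integral>\<^sup>+ x\<in>\<Omega>. ennreal (fb x powr p) \<partial>lebesgue)"
    using c by (subst nn_integral_cmult[symmetric]) (measurable, auto simp: ennreal_mult mult.assoc intro!: nn_integral_cong)
  also have "(\<integral>\<^sup>+ x. ennreal (c2 * fc x powr p) * indicator \<Omega> x \<partial>lebesgue) =
             ennreal c2 * (\<integral>\<^sup>+ x\<in>\<Omega>. ennreal (fc x powr p) \<partial>lebesgue)"
    using c by (subst nn_integral_cmult[symmetric]) (measurable, auto simp: ennreal_mult mult.assoc intro!: nn_integral_cong)
  finally show ?thesis by (simp add: c1_def c2_def)
qed



lemma w0_ineq:
  fixes \<Omega> :: "'a::euclidean_space set"
  assumes p: "p > 1" and \<Omega>: "open \<Omega>" and u: "norm u = 1"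
    and slab: "\<Omega> \<subseteq> {x. a \<le> u \<bullet> x \<and> u \<bullet> x \<le> b}" and ab: "a < b"
    and vg: "(v, g) \<in> W0 p \<Omega>"
  shows "(\<integral>\<^sup>+ x\<in>\<Omega>. ennreal (\<bar>v x\<bar> powr p) \<partial>lebesgue) < \<infinity> \<and>
         ennreal (ffK p * ((b-a)/2) powr (-p)) * (\<integral>\<^sup>+ x\<in>\<Omega>. ennreal (\<bar>v x\<bar> powr p) \<partial>lebesgue)
           \<le> (\<integral>\<^sup>+ x\<in>\<Omega>. ennreal (norm (g x) powr p) \<partial>lebesgue)"
proof -
  from vg obtain \<phi> Gs where vm [measurable]: "v \<in> borel_measurable lebesgue"
      and gm [measurable]: "g \<in> borel_measurable lebesgue"
      and tf: "\<And>k. test_fun \<Omega> (\<phi> k) (Gs k)"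
      and lim1: "(\<lambda>k. \<integral>\<^sup>+ x\<in>\<Omega>. ennreal (\<bar>\<phi> k x - v x\<bar> powr p) \<partial>lebesgue) \<longlonglongrightarrow> 0"
      and lim2: "(\<lambda>k. \<integral>\<^sup>+ x\<in>\<Omega>. ennreal (norm (Gs k x - g x) powr p) \<partial>lebesgue) \<longlonglongrightarrow> 0"
    unfolding W0_def by blast
  have \<Omega>m [measurable]: "\<Omega> \<in> sets lebesgue" using \<Omega> by simp
  have \<phi>m [measurable]: "\<phi> k \<in> borel_measurable lebesgue" for k
    using test_fun_props(2)[OF tf[of k]] by (rule cont_meas)
  have Gm [measurable]: "Gs k \<in> borel_measurable lebesgue" for k
    using test_fun_props(1)[OF tf[of k]] by (rule cont_meas)
  define C where "C = ffK p * ((b-a)/2) powr (-p)"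
  have C0: "C \<ge> 0" by (simp add: C_def ffK_def)
  define V where "V = (\<integral>\<^sup>+ x\<in>\<Omega>. ennreal (\<bar>v x\<bar> powr p) \<partial>lebesgue)"
  define Gg where "Gg = (\<integral>\<^sup>+ x\<in>\<Omega>. ennreal (norm (g x) powr p) \<partial>lebesgue)"
  define P where "P k = (\<integral>\<^sup>+ x\<in>\<Omega>. ennreal (\<bar>\<phi> k x\<bar> powr p) \<partial>lebesgue)" for k
  define Q where "Q k = (\<integral>\<^sup>+ x\<in>\<Omega>. ennreal (norm (Gs k x) powr p) \<partial>lebesgue)" for k
  define \<delta> where "\<delta> k = (\<integral>\<^sup>+ x\<in>\<Omega>. ennreal (\<bar>\<phi> k x - v x\<bar> powr p) \<partial>lebesgue)" for k
  define \<eta> where "\<eta> k = (\<integral>\<^sup>+ x\<in>\<Omega>. ennreal (norm (Gs k x - g x) powr p) \<partial>lebesgue)" for k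
  have PQ: "P k < \<infinity> \<and> ennreal C * P k \<le> Q k" for k
  proof -
    obtain A B where AB: "Q k = ennreal A" "P k = ennreal B" "C * B \<le> A"
      using main_test[OF p \<Omega> u slab ab tf[of k]] unfolding P_def Q_def C_def by blast
    have "B \<ge> 0 \<or> B < 0" by auto
    then show ?thesis
    proof
      assume B: "B \<ge> 0"
      then have "ennreal C * ennreal B = ennreal (C * B)" using C0 by (simp add: ennreal_mult)
      then show ?thesis using AB by (auto intro: ennreal_leI)
    next
      assume "B < 0" then show ?thesis using AB by (simp add: ennreal_neg)
    qed
  qed
  have s1: "V \<le> ennreal (l powr (1-p)) * P k + ennreal ((1-l) powr (1-p)) * \<delta> k"
    if "0 < l" "l < 1" for l k
    unfolding V_def P_def \<delta>_def
    by (rule split_int[where fa = v and fb = "\<lambda>x. \<bar>\<phi> k x\<bar>" and fc = "\<lambda>x. \<bar>\<phi> k x - v x\<bar>", simplified])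
       (use p that in auto)
  have s2: "Q k \<le> ennreal (l powr (1-p)) * Gg + ennreal ((1-l) powr (1-p)) * \<eta> k"
    if "0 < l" "l < 1" for l k
  proof -
    have tri: "\<And>x. \<bar>norm (Gs k x)\<bar> \<le> norm (g x) + norm (Gs k x - g x)"
      using norm_triangle_sub by simp
    have "(\<integral>\<^sup>+ x\<in>\<Omega>. ennreal (\<bar>norm (Gs k x)\<bar> powr p) \<partial>lebesgue) \<le> ennreal (l powr (1-p)) * Gg + ennreal ((1-l) powr (1-p)) * \<eta> k"
      unfolding Gg_def \<eta>_def
      by (rule split_int[where fa = "\<lambda>x. norm (Gs k x)" and fb = "\<lambda>x. norm (g x)" and fc = "\<lambda>x. norm (Gs k x - g x)", OF _ that norm_ge_zero norm_ge_zero tri])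
         (use p in auto)
    then show ?thesis by (simp add: Q_def)
  qed
  have l1: "\<delta> \<longlonglongrightarrow> 0" using lim1 by (simp add: \<delta>_def[abs_def])
  have l2: "\<eta> \<longlonglongrightarrow> 0" using lim2 by (simp add: \<eta>_def[abs_def])
  obtain k0 where k0: "\<delta> k0 < 1"
    using order_tendstoD(2)[OF l1, of 1] by (auto simp: eventually_sequentially)
  have Vfin: "V < \<infinity>"
  proof -
    have "V \<le> ennreal ((1/2) powr (1-p)) * P k0 + ennreal ((1-1/2) powr (1-p)) * \<delta> k0"
      by (rule s1) auto
    also have "\<dots> < \<infinity>"
    proof -
      have a: "P k0 < \<infinity>" using PQ[of k0] by blast
      have b: "\<delta> k0 < \<infinity>" using order.strict_trans[OF k0 ennreal_one_less_top] by simp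
      show ?thesis using a b by (simp add: ennreal_mult_less_top)
    qed
    finally show ?thesis .
  qed
  have key: "ennreal C * V \<le> ennreal (l powr (1-p)) * ennreal (l powr (1-p)) * Gg" if l: "0 < l" "l < 1" for l
  proof -
    define e1 where "e1 = ennreal (l powr (1-p))"
    define e2 where "e2 = ennreal ((1-l) powr (1-p))"
    define eC where "eC = ennreal C"
    have b: "eC * V \<le> e1 * (e1 * Gg + e2 * \<eta> k) + eC * e2 * \<delta> k" for k
    proof -
      have "eC * V \<le> eC * (e1 * P k + e2 * \<delta> k)"
        using s1[OF l, of k] unfolding e1_def e2_def by (rule mult_left_mono) simp
      also have "\<dots> = e1 * (eC * P k) + eC * e2 * \<delta> k" by (simp add: algebra_simps)
      also have "\<dots> \<le> e1 * Q k + eC * e2 * \<delta> k"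
        using PQ[of k] unfolding eC_def by (intro add_right_mono mult_left_mono) auto
      also have "\<dots> \<le> e1 * (e1 * Gg + e2 * \<eta> k) + eC * e2 * \<delta> k"
        using s2[OF l, of k] unfolding e1_def e2_def by (intro add_right_mono mult_left_mono) auto
      finally show ?thesis .
    qed
    have lim: "(\<lambda>k. e1 * (e1 * Gg + e2 * \<eta> k) + eC * e2 * \<delta> k) \<longlonglongrightarrow> e1 * (e1 * Gg + e2 * 0) + eC * e2 * 0"
      by (intro tendsto_add ennreal_tendsto_cmult tendsto_const l1 l2)
         (simp_all add: e1_def e2_def eC_def ennreal_mult_less_top)
    have "eC * V \<le> e1 * (e1 * Gg + e2 * 0) + eC * e2 * 0"
      by (rule LIMSEQ_le_const[OF lim]) (use b in auto)
    then show ?thesis by (simp add: e1_def eC_def mult.assoc)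
  qed
  have "ennreal C * V \<le> Gg"
  proof (cases "Gg = \<infinity>")
    case True then show ?thesis by simp
  next
    case False
    then obtain gr where gr: "Gg = ennreal gr" "gr \<ge> 0" by (cases Gg) auto
    obtain vr where vr: "V = ennreal vr" "vr \<ge> 0" using Vfin by (cases V) auto
    define l where "l n = 1 - inverse (real (Suc n)) / 2" for n
    have l01: "0 < l n" "l n < 1" for n
    proof -
      have "inverse (real (Suc n)) \<le> 1" "inverse (real (Suc n)) > 0" by (auto simp: field_simps)
      then show "0 < l n" "l n < 1" by (auto simp: l_def)
    qed
    have le: "C * vr \<le> l n powr (1-p) * l n powr (1-p) * gr" for n
    proof -
      have "ennreal (C * vr) \<le> ennreal (l n powr (1-p) * l n powr (1-p) * gr)"
        using key[OF l01[of n]] gr vr C0 by (simp add: ennreal_mult[symmetric] mult.assoc)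
      then show ?thesis using gr by (simp add: ennreal_le_iff)
    qed
    have ll: "l \<longlonglongrightarrow> 1"
    proof -
      have "(\<lambda>n. 1 - inverse (real (Suc n)) / 2) \<longlonglongrightarrow> 1 - 0 / (2::real)"
        by (intro tendsto_intros LIMSEQ_inverse_real_of_nat) auto
      then show ?thesis by (simp add: l_def[abs_def])
    qed
    have "(\<lambda>n. l n powr (1-p) * l n powr (1-p) * gr) \<longlonglongrightarrow> 1 powr (1-p) * 1 powr (1-p) * gr"
      by (intro tendsto_intros ll) auto
    then have "C * vr \<le> 1 powr (1-p) * 1 powr (1-p) * gr"
      by (rule LIMSEQ_le_const) (use le in auto)
    then show ?thesis using gr vr C0 by (simp add: ennreal_mult[symmetric])
  qed
  then show ?thesis using Vfin unfolding V_def Gg_def C_def by simp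
qed



theorem corollary2p1:
  fixes \<Omega> :: "'a::euclidean_space set" and p d :: real
  assumes "p > 1"
    and "open \<Omega>" and "bounded \<Omega>" and "smooth_domain \<Omega>"
    and "slab_diameter \<Omega> \<le> d"
  shows "ennreal ((p / (p - 1)) powr (p - 1) * (2 / d) powr p) \<le> lambda1 p \<Omega>"
proof -
  note p = assms(1) and \<Omega> = assms(2) and bd = assms(3) and dd = assms(5)
  define K where "K = (p / (p - 1)) powr (p - 1)"
  have K0: "K \<ge> 0" by (simp add: K_def)
  define SD where "SD = {b - a | u a b. norm (u::'a) = 1 \<and> \<Omega> \<subseteq> {x. a \<le> u \<bullet> x \<and> u \<bullet> x \<le> b}}"
  have sdd: "slab_diameter \<Omega> = Inf SD" by (simp add: slab_diameter_def SD_def)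
  show ?thesis unfolding lambda1_def K_def[symmetric]
  proof (rule Inf_greatest)
    fix r assume "r \<in> {(\<integral>\<^sup>+ x\<in>\<Omega>. ennreal (norm (g x) powr p) \<partial>lebesgue) /
                        (\<integral>\<^sup>+ x\<in>\<Omega>. ennreal (\<bar>v x\<bar> powr p) \<partial>lebesgue)
                      | v g. (v, g) \<in> W0 p \<Omega> \<and> (\<integral>\<^sup>+ x\<in>\<Omega>. ennreal (\<bar>v x\<bar> powr p) \<partial>lebesgue) \<noteq> 0}"
    then obtain v g where vg: "(v, g) \<in> W0 p \<Omega>"
      and V0: "(\<integral>\<^sup>+ x\<in>\<Omega>. ennreal (\<bar>v x\<bar> powr p) \<partial>lebesgue) \<noteq> 0"
      and r: "r = (\<integral>\<^sup>+ x\<in>\<Omega>. ennreal (norm (g x) powr p) \<partial>lebesgue) /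
                        (\<integral>\<^sup>+ x\<in>\<Omega>. ennreal (\<bar>v x\<bar> powr p) \<partial>lebesgue)" by blast
    define V where "V = (\<integral>\<^sup>+ x\<in>\<Omega>. ennreal (\<bar>v x\<bar> powr p) \<partial>lebesgue)"
    define Gg where "Gg = (\<integral>\<^sup>+ x\<in>\<Omega>. ennreal (norm (g x) powr p) \<partial>lebesgue)"
    have "\<Omega> \<noteq> {}" using V0 by auto
    then obtain x0 where x0: "x0 \<in> \<Omega>" by blast
    obtain r0 where r0: "r0 > 0" "cball x0 r0 \<subseteq> \<Omega>" using \<Omega> x0 open_contains_cball by blast
    have wide: "b - a \<ge> 2 * r0" if "norm u = 1" "\<Omega> \<subseteq> {x. a \<le> u \<bullet> x \<and> u \<bullet> x \<le> b}" for u a b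
    proof -
      have "x0 + r0 *\<^sub>R u \<in> cball x0 r0" "x0 - r0 *\<^sub>R u \<in> cball x0 r0"
        using that r0 by (auto simp: dist_norm)
      then have "x0 + r0 *\<^sub>R u \<in> \<Omega>" "x0 - r0 *\<^sub>R u \<in> \<Omega>" using r0 by auto
      then have "u \<bullet> (x0 + r0 *\<^sub>R u) \<le> b" "a \<le> u \<bullet> (x0 - r0 *\<^sub>R u)" using that by auto
      moreover have "u \<bullet> u = 1" using that by (simp add: power2_norm_eq_inner[symmetric])
      ultimately show ?thesis by (simp add: inner_add_right inner_diff_right)
    qed
    have SDne: "SD \<noteq> {}"
    proof -
      obtain M where M: "\<And>x. x \<in> \<Omega> \<Longrightarrow> norm x \<le> M" using bd bounded_iff by blast
      obtain u :: 'a where u: "u \<in> Basis" using nonempty_Basis by blast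
      have "\<Omega> \<subseteq> {x. -M \<le> u \<bullet> x \<and> u \<bullet> x \<le> M}"
      proof
        fix x assume "x \<in> \<Omega>"
        then have "\<bar>x \<bullet> u\<bar> \<le> M" using M[of x] Basis_le_norm[OF u, of x] by linarith
        then show "x \<in> {x. -M \<le> u \<bullet> x \<and> u \<bullet> x \<le> M}" by (simp add: inner_commute abs_le_iff)
      qed
      then have "M - (-M) \<in> SD" using u unfolding SD_def by force
      then show ?thesis by blast
    qed
    have SDlb: "2 * r0 \<le> Inf SD"
      by (rule cInf_greatest[OF SDne]) (use wide in \<open>auto simp: SD_def\<close>)
    have dpos: "d > 0" using SDlb dd sdd r0 by linarith
    have step: "ennreal (K * (2 / w) powr p) * V \<le> Gg \<and> V < \<infinity>" if w: "w > d" for w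
    proof -
      have "Inf SD < w" using dd sdd w by linarith
      from cInf_lessD[OF SDne this] obtain e where "e \<in> SD" "e < w" by blast
      then obtain u a b where u: "norm u = 1" and sl: "\<Omega> \<subseteq> {x. a \<le> u \<bullet> x \<and> u \<bullet> x \<le> b}"
        and e: "e = b - a" "b - a < w" unfolding SD_def by blast
      have ab: "b - a \<ge> 2 * r0" by (rule wide[OF u sl])
      then have ab': "a < b" using r0 by linarith
      from w0_ineq[OF p \<Omega> u sl ab' vg]
      have W: "V < \<infinity>" "ennreal (ffK p * ((b-a)/2) powr (-p)) * V \<le> Gg"
        unfolding V_def Gg_def by auto
      have "((b-a)/2) powr (-p) = (2/(b-a)) powr p"
        using ab' by (simp add: powr_minus_divide powr_divide)
      moreover have "(2 / w) powr p \<le> (2/(b-a)) powr p"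
        using ab' e p by (intro powr_mono2 divide_left_mono) auto
      ultimately have "K * (2 / w) powr p \<le> ffK p * ((b-a)/2) powr (-p)"
        using K0 by (simp add: ffK_def K_def mult_left_mono)
      then have "ennreal (K * (2 / w) powr p) * V \<le> ennreal (ffK p * ((b-a)/2) powr (-p)) * V"
        by (intro mult_right_mono ennreal_leI) auto
      then show ?thesis using W by auto
    qed
    have Vfin: "V < \<infinity>" using step[of "d+1"] by simp
    have main: "ennreal (K * (2 / d) powr p) * V \<le> Gg"
    proof (cases "Gg = \<infinity>")
      case True then show ?thesis by simp
    next
      case False
      then obtain gr where gr: "Gg = ennreal gr" "gr \<ge> 0" by (cases Gg) auto
      obtain vr where vr: "V = ennreal vr" "vr \<ge> 0" using Vfin by (cases V) auto
      define w where "w n = d + inverse (real (Suc n))" for n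
      have wd: "w n > d" for n by (simp add: w_def)
      have le: "K * (2 / w n) powr p * vr \<le> gr" for n
      proof -
        have "ennreal (K * (2 / w n) powr p * vr) \<le> ennreal gr"
          using step[OF wd[of n]] gr vr K0 by (simp add: ennreal_mult[symmetric])
        then show ?thesis using gr by (simp add: ennreal_le_iff)
      qed
      have wl: "w \<longlonglongrightarrow> d + 0"
        unfolding w_def[abs_def] by (intro tendsto_intros LIMSEQ_inverse_real_of_nat)
      have "(\<lambda>n. K * (2 / w n) powr p * vr) \<longlonglongrightarrow> K * (2 / (d + 0)) powr p * vr"
        using dpos by (intro tendsto_intros wl) auto
      then have "K * (2 / (d + 0)) powr p * vr \<le> gr"
        by (rule LIMSEQ_le_const2) (use le in auto)
      then show ?thesis using gr vr K0 dpos by (simp add: ennreal_mult[symmetric])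
    qed
    have "ennreal (K * (2 / d) powr p) = ennreal (K * (2 / d) powr p) * V / V"
      using V0 Vfin by (simp add: ennreal_mult_divide_eq V_def)
    also have "\<dots> \<le> Gg / V" by (rule divide_right_mono_ennreal[OF main])
    finally show "ennreal (K * (2 / d) powr p) \<le> r" by (simp add: r V_def Gg_def)
  qed
qed


end
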